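(* For $\theta\in(0,\pi/4]$, let $|\psi_\theta\rangle=\cos\theta|00\rangle+\sin\theta|11\rangle$ be a two-qubit pure state on $AB$ and $\psi_\theta=|\psi_\theta\rangle\langle\psi_\theta|$. Then its optimal unilocal 2-broadcasting fidelity on $A$ is \[ f_2(\psi_\theta)=\begin{cases}\cos^2\theta+\dfrac{\sin^2\theta}{\sqrt2}, & \theta\in(0,\arctan(2^{-1/4})],\\[2mm] \Big(\tfrac32(\cos^4\theta+\sin^4\theta)\Big)^{1/2}, & \theta\in(\arctan(2^{-1/4}),\pi/4].\end{cases} \]
   Context: Fidelity: $F(\rho,\sigma)=\mathrm{tr}\sqrt{\sqrt{\rho}\sigma\sqrt{\rho}}$. Let $A_1,A_2$ be copies of the qubit system $A$. The optimal unilocal $2$-broadcasting fidelity of a state $\rho_{AB}$ on $A$ is \[f_2(\rho_{AB})=\sup\Big\{\frac12\sum_{j=1}^2F\big(\rho_{AB},\mathrm{tr}_{\backslash A_jB}(\Lambda_{A\to A_1A_2}\otimes\mathrm{id}_B)(\rho_{AB})\big):\ \Lambda \text{ a quantum channel}\Big\},\] where $\mathrm{tr}_{\backslash A_jB}$ traces out all systems other than $A_j$ and $B$, and $A_j$ is identified with $A$. *)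

theory Defs
  imports "HOL-Analysis.Analysis" "Jordan_Normal_Form.Matrix"
begin

(* Complex matrices: Jordan_Normal_Form 'complex mat'.
   Composite-system index convention: for systems X (dim dX) and Y (dim dY),
   the basis vector |x>|y> of X (x) Y has index x * dY + y. *)

definition mtrace :: "complex mat \<Rightarrow> complex" where
  "mtrace A = (\<Sum>i<dim_row A. A $$ (i,i))"

definition adj :: "complex mat \<Rightarrow> complex mat" where
  "adj A = mat (dim_col A) (dim_row A) (\<lambda>(i,j). cnj (A $$ (j,i)))"

definition psd :: "nat \<Rightarrow> complex mat \<Rightarrow> bool" where
  "psd n A \<longleftrightarrow> A \<in> carrier_mat n n \<and> adj A = A \<and>
     (\<forall>v \<in> carrier_vec n.
        let q = (\<Sum>i<n. \<Sum>j<n. cnj (v $ i) * A $$ (i,j) * v $ j) in Im q = 0 \<and> Re q \<ge> 0)"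

definition psd_sqrt :: "complex mat \<Rightarrow> complex mat" where
  "psd_sqrt A = (THE S. psd (dim_row A) S \<and> S * S = A)"

definition fidelity :: "complex mat \<Rightarrow> complex mat \<Rightarrow> real" where
  "fidelity \<rho> \<sigma> = Re (mtrace (psd_sqrt (psd_sqrt \<rho> * \<sigma> * psd_sqrt \<rho>)))"

(* (L (x) id_Y)(X) for a map L from dX x dX matrices to dO x dO matrices,
   X a matrix on X (x) Y with dim Y = dY *)
definition tensor_id :: "(complex mat \<Rightarrow> complex mat) \<Rightarrow> nat \<Rightarrow> nat \<Rightarrow> nat \<Rightarrow> complex mat \<Rightarrow> complex mat" where
  "tensor_id L dX dO dY X = mat (dO * dY) (dO * dY) (\<lambda>(i,j).
      L (mat dX dX (\<lambda>(a,a'). X $$ (a * dY + i mod dY, a' * dY + j mod dY))) $$ (i div dY, j div dY))"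

definition quantum_channel :: "(complex mat \<Rightarrow> complex mat) \<Rightarrow> nat \<Rightarrow> nat \<Rightarrow> bool" where
  "quantum_channel L dX dO \<longleftrightarrow>
     (\<forall>X \<in> carrier_mat dX dX. L X \<in> carrier_mat dO dO) \<and>
     (\<forall>X \<in> carrier_mat dX dX. \<forall>Y \<in> carrier_mat dX dX. L (X + Y) = L X + L Y) \<and>
     (\<forall>X \<in> carrier_mat dX dX. \<forall>c. L (c \<cdot>\<^sub>m X) = c \<cdot>\<^sub>m L X) \<and>
     (\<forall>X \<in> carrier_mat dX dX. mtrace (L X) = mtrace X) \<and>
     (\<forall>n X. psd (dX * n) X \<longrightarrow> psd (dO * n) (tensor_id L dX dO n X))"

(* Qubit case. A1A2B index: (a1*2 + a2)*2 + b.  Reduced states on A1B and A2B,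
   with A_j identified with A (index a*2 + b). *)
definition red_A1B :: "complex mat \<Rightarrow> complex mat" where
  "red_A1B T = mat 4 4 (\<lambda>(i,j).
     (\<Sum>a2<2. T $$ (((i div 2) * 2 + a2) * 2 + i mod 2, ((j div 2) * 2 + a2) * 2 + j mod 2)))"

definition red_A2B :: "complex mat \<Rightarrow> complex mat" where
  "red_A2B T = mat 4 4 (\<lambda>(i,j).
     (\<Sum>a1<2. T $$ ((a1 * 2 + i div 2) * 2 + i mod 2, (a1 * 2 + j div 2) * 2 + j mod 2)))"

definition f2 :: "complex mat \<Rightarrow> real" where
  "f2 \<rho> = Sup {(fidelity \<rho> (red_A1B (tensor_id L 2 4 2 \<rho>))
               + fidelity \<rho> (red_A2B (tensor_id L 2 4 2 \<rho>))) / 2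
             | L. quantum_channel L 2 4}"

definition psi_vec :: "real \<Rightarrow> complex vec" where
  "psi_vec \<theta> = vec 4 (\<lambda>i. if i = 0 then complex_of_real (cos \<theta>)
                          else if i = 3 then complex_of_real (sin \<theta>) else 0)"

definition psi :: "real \<Rightarrow> complex mat" where
  "psi \<theta> = mat 4 4 (\<lambda>(i,j). psi_vec \<theta> $ i * cnj (psi_vec \<theta> $ j))"

end

theory Submission
  imports Defs
begin

definition qf :: "nat \<Rightarrow> complex mat \<Rightarrow> (nat \<Rightarrow> complex) \<Rightarrow> complex" where
  "qf n A f = (\<Sum>i<n. \<Sum>j<n. cnj (f i) * A $$ (i,j) * f j)"

lemma psd_qf: assumes "psd n A" shows "Im (qf n A f) = 0" "Re (qf n A f) \<ge> 0"
proof -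
  have v: "vec n f \<in> carrier_vec n" by simp
  have e: "qf n A f = (\<Sum>i<n. \<Sum>j<n. cnj (vec n f $ i) * A $$ (i,j) * vec n f $ j)"
    unfolding qf_def by (intro sum.cong refl) auto
  from assms v show "Im (qf n A f) = 0" "Re (qf n A f) \<ge> 0"
    unfolding psd_def Let_def e by blast+
qed

lemma psd_herm: assumes "psd n A" "i < n" "j < n" shows "A $$ (j,i) = cnj (A $$ (i,j))"
proof -
  from assms have c: "A \<in> carrier_mat n n" and h: "adj A = A" unfolding psd_def by auto
  have "adj A $$ (i,j) = cnj (A $$ (j,i))" using c assms unfolding adj_def by auto
  then show ?thesis using h by simp
qed

lemma d_mult1: "(if k = i then a else 0) * (x::complex) = (if k = i then a * x else 0)" by simp
lemma d_mult2: "(x::complex) * (if k = i then a else 0) = (if k = i then x * a else 0)" by simp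
lemma d_cnj: "cnj (if k = i then a else 0) = (if k = i then cnj a else 0)" by simp

lemma qf2:
  assumes "i \<noteq> j" "i < n" "j < n"
  shows "qf n A (\<lambda>k. if k = i then a else if k = j then b else 0) =
    cnj a * a * A $$ (i,i) + cnj a * b * A $$ (i,j) + cnj b * a * A $$ (j,i) + cnj b * b * A $$ (j,j)"
proof -
  have f: "(\<lambda>k. if k = i then a else if k = j then b else 0) = (\<lambda>k. (if k = i then a else 0) + (if k = j then b else 0))"
    using assms by auto
  show ?thesis unfolding qf_def f
    using assms by (simp add: d_mult1 d_mult2 d_cnj distrib_left distrib_right sum.distrib sum.delta)
qed

lemma qf1:
  assumes "i < n"
  shows "qf n A (\<lambda>k. if k = i then 1 else 0) = A $$ (i,i)"
  using assms unfolding qf_def by (simp add: d_mult1 d_mult2 d_cnj sum.delta)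

definition pvf :: "real \<Rightarrow> nat \<Rightarrow> complex" where
  "pvf \<theta> i = (if i = 0 then complex_of_real (cos \<theta>) else if i = 3 then complex_of_real (sin \<theta>) else 0)"

lemma psi_carrier: "psi \<theta> \<in> carrier_mat 4 4" unfolding psi_def by simp

lemma psi_idx: "i < 4 \<Longrightarrow> j < 4 \<Longrightarrow> psi \<theta> $$ (i,j) = pvf \<theta> i * pvf \<theta> j"
  unfolding psi_def psi_vec_def pvf_def by auto

lemma cnj_pvf[simp]: "cnj (pvf \<theta> i) = pvf \<theta> i" unfolding pvf_def by auto

lemma mult4: assumes "A \<in> carrier_mat n k" "B \<in> carrier_mat k m" "i < n" "j < m"
  shows "(A * B) $$ (i,j) = (\<Sum>l<k. A $$ (i,l) * B $$ (l,j))"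
  using assms by (simp add: scalar_prod_def atLeast0LessThan)

lemma real_core:
  fixes ar dr zr zi q c s :: real
  assumes c: "c > 0" and s: "s > 0" and cs: "c^2 + s^2 = 1" and q: "q \<ge> 0"
    and ar: "ar \<ge> 0" and dr: "dr \<ge> 0"
    and E1: "ar^2 + zr^2 + zi^2 = q * c^2"
    and E2: "(ar + dr) * zr = q * c * s" and E2': "(ar + dr) * zi = 0"
    and E3: "zr^2 + zi^2 + dr^2 = q * s^2"
  shows "ar = sqrt q * c^2 \<and> dr = sqrt q * s^2 \<and> zr = sqrt q * c * s \<and> zi = 0"
proof (cases "q = 0")
  case True
  then have e0: "ar^2 + zr^2 + zi^2 = 0" using E1 by simp
  have "ar^2 = 0" "zr^2 = 0" "zi^2 = 0" using e0 zero_le_power2[of ar] zero_le_power2[of zr] zero_le_power2[of zi] by linarith+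
  then have "ar = 0" "zr = 0" "zi = 0" by auto
  moreover have "dr = 0" using E3 True \<open>zr = 0\<close> \<open>zi = 0\<close> by simp
  ultimately show ?thesis using True by simp
next
  case False
  then have qp: "q > 0" using q by simp
  have "ar + dr \<noteq> 0" using E2 qp c s by auto
  then have zi: "zi = 0" using E2' by simp
  have "(ar* s - zr* c)^2 + (zr* s - dr* c)^2 = s^2*(ar^2+zr^2+zi^2) + c^2*(zr^2+zi^2+dr^2) - 2 * c * s * ((ar + dr) * zr)"
    using zi by (simp add: power2_eq_square algebra_simps)
  also have "\<dots> = 0" using E1 E2 E3 by (simp add: power2_eq_square algebra_simps)
  finally have "(ar* s - zr* c)^2 + (zr* s - dr* c)^2 = 0" .
  then have k1: "ar* s = zr* c" and k2: "zr* s = dr* c"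
    by (smt (verit) power2_less_eq_zero_iff sum_power2_eq_zero_iff)+
  have zr: "zr = ar * s / c" using k1 c by (simp add: field_simps)
  have drr: "dr = zr * s / c" using k2 c by (simp add: field_simps)
  have "ar^2 * (c^2 + s^2) = q * c^2 * c^2"
  proof -
    have "ar^2 + (ar* s/c)^2 = q * c^2" using E1 zi zr by simp
    then have "(ar^2 + (ar* s/c)^2) * c^2 = q * c^2 * c^2" by simp
    moreover have "(ar^2 + (ar* s/c)^2) * c^2 = ar^2 * (c^2 + s^2)" using c by (simp add: field_simps power2_eq_square)
    ultimately show ?thesis by simp
  qed
  then have "ar^2 = (sqrt q * c^2)^2" using cs q by (simp add: power2_eq_square real_sqrt_mult[symmetric] )
  then have ara: "ar = sqrt q * c^2" using ar q by (simp add: power2_eq_iff)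
     (metis (mono_tags) ar mult_nonneg_nonneg real_sqrt_ge_zero zero_le_power2 abs_of_nonneg real_sqrt_abs power2_eq_iff)
  have zra: "zr = sqrt q * c * s" using ara zr c by (simp add: power2_eq_square field_simps)
  have "dr = sqrt q * s^2" using zra drr c by (simp add: power2_eq_square field_simps)
  then show ?thesis using ara zra zi by simp
qed

lemma dim_psi[simp]: "dim_row (psi \<theta>) = 4" "dim_col (psi \<theta>) = 4" unfolding psi_def by auto

lemma cs_facts: assumes "0 < \<theta>" "\<theta> \<le> pi/4"
  shows "cos \<theta> > 0" "sin \<theta> > 0"
proof -
  show "cos \<theta> > 0" using assms by (intro cos_gt_zero_pi) (use pi_gt_zero in linarith)+
  show "sin \<theta> > 0" using assms by (intro sin_gt_zero) (use pi_gt_zero in linarith)+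
qed

lemma sqrt_unique:
  assumes th: "0 < \<theta>" "\<theta> \<le> pi/4" and q: "q \<ge> 0"
    and S: "psd 4 S" and SS: "S * S = complex_of_real q \<cdot>\<^sub>m psi \<theta>"
  shows "S = complex_of_real (sqrt q) \<cdot>\<^sub>m psi \<theta>"
proof -
  define c where "c = cos \<theta>"
  define s where "s = sin \<theta>"
  have c: "c > 0" and s: "s > 0" using cs_facts[OF th] c_def s_def by auto
  have cs: "c^2 + s^2 = 1" unfolding c_def s_def by simp
  have Sc: "S \<in> carrier_mat 4 4" using S unfolding psd_def by (rule conjunct1)
  have herm: "\<And>i j. i < 4 \<Longrightarrow> j < 4 \<Longrightarrow> S $$ (j,i) = cnj (S $$ (i,j))" by (rule psd_herm[OF S])
  have eqn: "\<And>i j. i < 4 \<Longrightarrow> j < 4 \<Longrightarrow> (\<Sum>k<4. S $$ (i,k) * S $$ (k,j)) = complex_of_real q * (pvf \<theta> i * pvf \<theta> j)"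
  proof -
    fix i j :: nat assume ij: "i < 4" "j < 4"
    have "(S * S) $$ (i,j) = (\<Sum>k<4. S $$ (i,k) * S $$ (k,j))" using mult4[OF Sc Sc ij] .
    also have "(S * S) $$ (i,j) = complex_of_real q * (pvf \<theta> i * pvf \<theta> j)"
      unfolding SS using ij by (simp add: psi_idx)
    finally show "(\<Sum>k<4. S $$ (i,k) * S $$ (k,j)) = complex_of_real q * (pvf \<theta> i * pvf \<theta> j)" by simp
  qed
  have row0: "S $$ (i,k) = 0" if ik: "i < 4" "k < 4" "pvf \<theta> i = 0" for i k
  proof -
    have "(\<Sum>k<4. S $$ (i,k) * S $$ (k,i)) = 0" using eqn[of i i] ik by simp
    also have "(\<Sum>k<4. S $$ (i,k) * S $$ (k,i)) = (\<Sum>k<4. complex_of_real (norm (S $$ (i,k)) ^ 2))"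
    proof (intro sum.cong refl)
      fix k assume "k \<in> {..<4::nat}"
      then have "S $$ (k,i) = cnj (S $$ (i,k))" using ik by (intro herm) auto
      then show "S $$ (i,k) * S $$ (k,i) = complex_of_real (norm (S $$ (i,k)) ^ 2)"
        by (simp only: complex_norm_square)
    qed
    finally have "(\<Sum>k<4. norm (S $$ (i,k)) ^ 2) = 0"
      by (metis of_real_eq_0_iff of_real_sum)
    then have "\<forall>k\<in>{..<4}. norm (S $$ (i,k)) ^ 2 = 0"
      by (subst sum_nonneg_eq_0_iff[symmetric]) auto
    then show ?thesis using ik by auto
  qed
  have p1: "pvf \<theta> 1 = 0" "pvf \<theta> 2 = 0" unfolding pvf_def by auto
  have z: "S $$ (1,k) = 0" "S $$ (2,k) = 0" "S $$ (k,1) = 0" "S $$ (k,2) = 0" if "k < 4" for k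
  proof -
    show "S $$ (1,k) = 0" "S $$ (2,k) = 0" using row0[OF _ that p1(1)] row0[OF _ that p1(2)] by auto
    have "S $$ (k,1) = cnj (S $$ (1,k))" "S $$ (k,2) = cnj (S $$ (2,k))" using that by (intro herm; simp)+
    then show "S $$ (k,1) = 0" "S $$ (k,2) = 0" using row0[OF _ that p1(1)] row0[OF _ that p1(2)] by auto
  qed
  define a where "a = S $$ (0,0)"
  define d where "d = S $$ (3,3)"
  define w where "w = S $$ (0,3)"
  have w': "S $$ (3,0) = cnj w" unfolding w_def by (rule herm) simp_all
  have "S $$ (0,0) = cnj (S $$ (0,0))" by (rule herm) simp_all
  then have "a = cnj a" unfolding a_def .
  have ar: "Im a = 0" using arg_cong[OF \<open>a = cnj a\<close>, of Im] by simp
  have "S $$ (3,3) = cnj (S $$ (3,3))" by (rule herm) simp_all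
  then have "d = cnj d" unfolding d_def .
  have dr: "Im d = 0" using arg_cong[OF \<open>d = cnj d\<close>, of Im] by simp
  have ap: "Re a \<ge> 0" using psd_qf(2)[OF S, of "\<lambda>k. if k = 0 then 1 else 0"] qf1[of 0 4 S] a_def by simp
  have dp: "Re d \<ge> 0" using psd_qf(2)[OF S, of "\<lambda>k. if k = 3 then 1 else 0"] qf1[of 3 4 S] d_def by simp
  have pv0: "pvf \<theta> 0 = complex_of_real c" and pv3: "pvf \<theta> 3 = complex_of_real s" unfolding pvf_def c_def s_def by auto
  have sum4: "\<And>f. (\<Sum>k<4::nat. f k) = f 0 + f 1 + f 2 + (f 3 :: complex)"
    by (simp add: numeral_eq_Suc lessThan_Suc add.assoc)
  have e00: "a * a + w * cnj w = complex_of_real (q * c^2)"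
    using eqn[of 0 0] unfolding sum4 using z[of 0] w' pv0 by (simp add: a_def[symmetric] w_def[symmetric] power2_eq_square)
  have e03: "a * w + w * d = complex_of_real (q * c * s)"
    using eqn[of 0 3] unfolding sum4 using z[of 0] z[of 3] pv0 pv3 by (simp add: a_def[symmetric] d_def[symmetric] w_def[symmetric])
  have e33: "cnj w * w + d * d = complex_of_real (q * s^2)"
    using eqn[of 3 3] unfolding sum4 using z[of 3] w' pv3 by (simp add: d_def[symmetric] w_def[symmetric] power2_eq_square)
  have E1: "(Re a)^2 + (Re w)^2 + (Im w)^2 = q * c^2"
    using arg_cong[OF e00, of Re] ar by (simp add: power2_eq_square)
  have E2: "(Re a + Re d) * Re w = q * c * s"
    using arg_cong[OF e03, of Re] ar dr by (simp add: algebra_simps)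
  have E2': "(Re a + Re d) * Im w = 0"
    using arg_cong[OF e03, of Im] ar dr by (simp add: algebra_simps)
  have E3: "(Re w)^2 + (Im w)^2 + (Re d)^2 = q * s^2"
    using arg_cong[OF e33, of Re] dr by (simp add: power2_eq_square)
  from real_core[OF c s cs q ap dp E1 E2 E2' E3]
  have R: "Re a = sqrt q * c^2" "Re d = sqrt q * s^2" "Re w = sqrt q * c * s" "Im w = 0" by auto
  have A: "a = complex_of_real (sqrt q * c^2)" using R ar by (simp add: complex_eq_iff)
  have D: "d = complex_of_real (sqrt q * s^2)" using R dr by (simp add: complex_eq_iff)
  have W: "w = complex_of_real (sqrt q * c * s)" using R by (simp add: complex_eq_iff)
  show ?thesis
  proof (rule eq_matI)
    fix i j assume "i < dim_row (complex_of_real (sqrt q) \<cdot>\<^sub>m psi \<theta>)" "j < dim_col (complex_of_real (sqrt q) \<cdot>\<^sub>m psi \<theta>)"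
    then have ij: "i < 4" "j < 4" using psi_carrier by auto
    have rhs: "(complex_of_real (sqrt q) \<cdot>\<^sub>m psi \<theta>) $$ (i,j) = complex_of_real (sqrt q) * (pvf \<theta> i * pvf \<theta> j)"
      using ij by (simp add: psi_idx)
    have "i = 0 \<or> i = 1 \<or> i = 2 \<or> i = 3" "j = 0 \<or> j = 1 \<or> j = 2 \<or> j = 3" using ij by auto
    then show "S $$ (i,j) = (complex_of_real (sqrt q) \<cdot>\<^sub>m psi \<theta>) $$ (i,j)"
      unfolding rhs
      apply (elim disjE)
      using z[of 0] z[of 3] z[of 1] z[of 2] A D W w' pv0 pv3 p1
      by (simp_all add: a_def[symmetric] d_def[symmetric] w_def[symmetric] power2_eq_square)
  qed (use Sc psi_carrier in auto)
qed

lemma sum4: "(\<Sum>k<4::nat. f k) = f 0 + f 1 + f 2 + (f 3 :: 'a::comm_monoid_add)"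
  by (simp add: numeral_eq_Suc lessThan_Suc add_ac)

lemma pvf_sq_sum: "(\<Sum>k<4. pvf \<theta> k * pvf \<theta> k) = 1"
proof -
  have "cos \<theta> * cos \<theta> + sin \<theta> * sin \<theta> = 1" using sin_cos_squared_add[of \<theta>] by (simp add: power2_eq_square algebra_simps)
  then have "complex_of_real (cos \<theta> * cos \<theta> + sin \<theta> * sin \<theta>) = 1" by simp
  then have "complex_of_real (cos \<theta>) * complex_of_real (cos \<theta>) + complex_of_real (sin \<theta>) * complex_of_real (sin \<theta>) = 1"
    by (simp only: of_real_add of_real_mult)
  then show ?thesis unfolding sum4 pvf_def by simp
qed

lemma psi_sq: "psi \<theta> * psi \<theta> = psi \<theta>"
proof (rule eq_matI)
  fix i j assume ij: "i < dim_row (psi \<theta>)" "j < dim_col (psi \<theta>)"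
  then have ij: "i < 4" "j < 4" by auto
  have "(psi \<theta> * psi \<theta>) $$ (i,j) = (\<Sum>k<4. pvf \<theta> i * pvf \<theta> k * (pvf \<theta> k * pvf \<theta> j))"
    using mult4[OF psi_carrier psi_carrier ij] ij by (simp add: psi_idx)
  also have "\<dots> = pvf \<theta> i * pvf \<theta> j * (\<Sum>k<4. pvf \<theta> k * pvf \<theta> k)"
    by (simp add: sum_distrib_left algebra_simps)
  finally show "(psi \<theta> * psi \<theta>) $$ (i,j) = psi \<theta> $$ (i,j)" using ij by (simp add: pvf_sq_sum psi_idx)
qed auto

lemma psd_scaled: assumes r: "r \<ge> 0" shows "psd 4 (complex_of_real r \<cdot>\<^sub>m psi \<theta>)"
proof -
  let ?A = "complex_of_real r \<cdot>\<^sub>m psi \<theta>"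
  have idx: "?A $$ (i,j) = complex_of_real r * (pvf \<theta> i * pvf \<theta> j)" if "i < 4" "j < 4" for i j
    using that by (simp add: psi_idx)
  have c: "?A \<in> carrier_mat 4 4" by (simp add: carrier_matI)
  have h: "adj ?A = ?A"
    unfolding adj_def by (rule eq_matI) (auto simp: idx psi_idx)
  have q: "Im q = 0 \<and> Re q \<ge> 0" if "q = (\<Sum>i<4. \<Sum>j<4. cnj (v $ i) * ?A $$ (i,j) * v $ j)" for q v
  proof -
    define W where "W = (\<Sum>j<4. pvf \<theta> j * v $ j)"
    have cW: "cnj W = (\<Sum>j<4. pvf \<theta> j * cnj (v $ j))" unfolding W_def by simp
    have "q = (\<Sum>i<4. \<Sum>j<4. complex_of_real r * (pvf \<theta> i * cnj (v $ i)) * (pvf \<theta> j * v $ j))"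
      unfolding that by (intro sum.cong refl) (simp add: idx psi_idx algebra_simps)
    also have "\<dots> = complex_of_real r * cnj W * W"
      unfolding cW W_def by (simp add: sum_distrib_left sum_distrib_right algebra_simps)
    also have "\<dots> = complex_of_real (r * (norm W)^2)"
    proof -
      have "cnj W * W = complex_of_real ((norm W)^2)" by (metis complex_norm_square mult.commute)
      then show ?thesis by (simp add: mult.assoc)
    qed
    finally show ?thesis using r by simp
  qed
  show ?thesis unfolding psd_def Let_def using c h q by blast
qed

lemma scaled_sq: "(complex_of_real r \<cdot>\<^sub>m psi \<theta>) * (complex_of_real r \<cdot>\<^sub>m psi \<theta>) = complex_of_real (r * r) \<cdot>\<^sub>m psi \<theta>"
proof -
  have "(complex_of_real r \<cdot>\<^sub>m psi \<theta>) * (complex_of_real r \<cdot>\<^sub>m psi \<theta>)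
      = complex_of_real r \<cdot>\<^sub>m (complex_of_real r \<cdot>\<^sub>m (psi \<theta> * psi \<theta>))"
    using mult_smult_assoc_mat[OF psi_carrier smult_carrier_mat[OF psi_carrier], of "complex_of_real r" \<theta> "complex_of_real r" \<theta>]
      mult_smult_distrib[OF psi_carrier psi_carrier, of \<theta> "complex_of_real r" \<theta>] by simp
  also have "\<dots> = complex_of_real (r * r) \<cdot>\<^sub>m psi \<theta>" unfolding psi_sq by (rule eq_matI) auto
  finally show ?thesis .
qed

lemma psd_sqrt_scaled:
  assumes th: "0 < \<theta>" "\<theta> \<le> pi/4" and q: "q \<ge> 0"
  shows "psd_sqrt (complex_of_real q \<cdot>\<^sub>m psi \<theta>) = complex_of_real (sqrt q) \<cdot>\<^sub>m psi \<theta>"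
  unfolding psd_sqrt_def
proof (rule the_equality)
  show "psd (dim_row (complex_of_real q \<cdot>\<^sub>m psi \<theta>)) (complex_of_real (sqrt q) \<cdot>\<^sub>m psi \<theta>) \<and>
    complex_of_real (sqrt q) \<cdot>\<^sub>m psi \<theta> * (complex_of_real (sqrt q) \<cdot>\<^sub>m psi \<theta>) = complex_of_real q \<cdot>\<^sub>m psi \<theta>"
    using psd_scaled[of "sqrt q" \<theta>] q by (simp add: scaled_sq)
next
  fix S assume "psd (dim_row (complex_of_real q \<cdot>\<^sub>m psi \<theta>)) S \<and> S * S = complex_of_real q \<cdot>\<^sub>m psi \<theta>"
  then show "S = complex_of_real (sqrt q) \<cdot>\<^sub>m psi \<theta>" using sqrt_unique[OF th q] by simp
qed

lemma psd_sqrt_psi: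
  assumes th: "0 < \<theta>" "\<theta> \<le> pi/4"
  shows "psd_sqrt (psi \<theta>) = psi \<theta>"
proof -
  have e: "(1::complex) \<cdot>\<^sub>m psi \<theta> = psi \<theta>" by (rule eq_matI) auto
  show ?thesis using psd_sqrt_scaled[OF th, of 1] by (simp add: e)
qed

lemma fid_pure:
  assumes th: "0 < \<theta>" "\<theta> \<le> pi/4" and sc: "\<sigma> \<in> carrier_mat 4 4"
    and p: "p = (\<Sum>i<4. \<Sum>j<4. pvf \<theta> i * \<sigma> $$ (i,j) * pvf \<theta> j)"
    and pI: "Im p = 0" and pR: "Re p \<ge> 0"
  shows "fidelity (psi \<theta>) \<sigma> = sqrt (Re p)"
proof -
  have pe: "p = complex_of_real (Re p)" using pI by (simp add: complex_eq_iff)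
  have M: "psi \<theta> * \<sigma> * psi \<theta> = p \<cdot>\<^sub>m psi \<theta>"
  proof (rule eq_matI)
    fix i j assume "i < dim_row (p \<cdot>\<^sub>m psi \<theta>)" "j < dim_col (p \<cdot>\<^sub>m psi \<theta>)"
    then have ij: "i < 4" "j < 4" by auto
    have PS: "psi \<theta> * \<sigma> \<in> carrier_mat 4 4" using sc psi_carrier by auto
    have e1: "(psi \<theta> * \<sigma> * psi \<theta>) $$ (i,j) = (\<Sum>l<4. (psi \<theta> * \<sigma>) $$ (i,l) * psi \<theta> $$ (l,j))"
      using mult4[OF PS psi_carrier ij] .
    also have "\<dots> = (\<Sum>l<4. (\<Sum>k<4. pvf \<theta> i * pvf \<theta> k * \<sigma> $$ (k,l)) * (pvf \<theta> l * pvf \<theta> j))"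
      by (intro sum.cong refl) (simp add: mult4[OF psi_carrier sc] ij psi_idx)
    also have "\<dots> = p * (pvf \<theta> i * pvf \<theta> j)"
      unfolding p sum4 by (simp add: algebra_simps)
    finally show "(psi \<theta> * \<sigma> * psi \<theta>) $$ (i,j) = (p \<cdot>\<^sub>m psi \<theta>) $$ (i,j)" using ij by (simp add: psi_idx)
  qed auto
  have "fidelity (psi \<theta>) \<sigma> = Re (mtrace (complex_of_real (sqrt (Re p)) \<cdot>\<^sub>m psi \<theta>))"
    unfolding fidelity_def psd_sqrt_psi[OF th] M using psd_sqrt_scaled[OF th pR] pe by metis
  also have "mtrace (complex_of_real (sqrt (Re p)) \<cdot>\<^sub>m psi \<theta>) = complex_of_real (sqrt (Re p)) * (\<Sum>k<4. pvf \<theta> k * pvf \<theta> k)"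
    unfolding mtrace_def by (simp add: psi_idx sum_distrib_left)
  finally show ?thesis by (simp add: pvf_sq_sum)
qed

lemma psd_diag: assumes "psd n A" "i < n" shows "Re (A $$ (i,i)) \<ge> 0"
  using psd_qf(2)[OF assms(1), of "\<lambda>k. if k = i then 1 else 0"] qf1[OF assms(2), of A] by simp

lemma psd2:
  assumes A: "psd n A" and ij: "i \<noteq> j" "i < n" "j < n" and a: "a \<ge> 0" and b: "b \<ge> 0" and m: "m^2 \<le> a * b"
  shows "m * (Re (A $$ (i,j)) + Re (A $$ (j,i))) \<le> a * Re (A $$ (i,i)) + b * Re (A $$ (j,j))"
proof (cases "a = 0")
  case True
  then have "m = 0" using m by simp
  then show ?thesis using True b psd_diag[OF A ij(3)] by simp
next
  case False
  then have ap: "a > 0" using a by simp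
  define x where "x = sqrt a"
  define y where "y = - m / sqrt a"
  have "Re (qf n A (\<lambda>k. if k = i then complex_of_real x else if k = j then complex_of_real y else 0)) \<ge> 0"
    by (rule psd_qf(2)[OF A])
  then have "0 \<le> x*x * Re (A $$ (i,i)) + x*y * (Re (A $$ (i,j)) + Re (A $$ (j,i))) + y*y * Re (A $$ (j,j))"
    unfolding qf2[OF ij] by (simp add: algebra_simps)
  moreover have "x*x = a" "x*y = -m" "y*y = m^2 / a" unfolding x_def y_def using ap
    by (auto simp: power2_eq_square)
  ultimately have 1: "0 \<le> a * Re (A $$ (i,i)) - m * (Re (A $$ (i,j)) + Re (A $$ (j,i))) + m^2 / a * Re (A $$ (j,j))"
    by simp
  have "m^2 / a \<le> b" using m ap by (simp add: field_simps mult.commute)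
  then have "m^2 / a * Re (A $$ (j,j)) \<le> b * Re (A $$ (j,j))" using psd_diag[OF A ij(3)] by (rule mult_right_mono)
  then show ?thesis using 1 by linarith
qed

definition Phi :: "complex mat" where
  "Phi = mat 4 4 (\<lambda>(i,j). if (i = 0 \<or> i = 3) \<and> (j = 0 \<or> j = 3) then 1 else 0)"

lemma psd_Phi: "psd 4 Phi"
proof -
  have c: "Phi \<in> carrier_mat 4 4" unfolding Phi_def by simp
  have h: "adj Phi = Phi" unfolding adj_def Phi_def by (rule eq_matI) auto
  have q: "Im q = 0 \<and> Re q \<ge> 0" if "q = (\<Sum>i<4. \<Sum>j<4. cnj (v $ i) * Phi $$ (i,j) * v $ j)" for q v
  proof -
    have "q = cnj (v $ 0 + v $ 3) * (v $ 0 + v $ 3)" unfolding that sum4 Phi_def by (simp add: algebra_simps)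
    also have "\<dots> = complex_of_real ((norm (v $ 0 + v $ 3))^2)" by (metis complex_norm_square mult.commute)
    finally show ?thesis by simp
  qed
  show ?thesis unfolding psd_def Let_def using c h q by blast
qed

definition xv :: "real \<Rightarrow> nat \<Rightarrow> complex" where
  "xv \<theta> b = (if b = 0 then complex_of_real (cos \<theta>) else complex_of_real (sin \<theta>))"

lemma less2: "(a::nat) < 2 \<Longrightarrow> a = 0 \<or> a = 1" by auto

lemma T_entry:
  assumes Lc: "quantum_channel L 2 4" and ij: "i < 8" "j < 8"
  shows "tensor_id L 2 4 2 (psi \<theta>) $$ (i,j) = xv \<theta> (i mod 2) * xv \<theta> (j mod 2) * tensor_id L 2 4 2 Phi $$ (i,j)"
proof -
  define BP where "BP = mat 2 2 (\<lambda>(a,a'). Phi $$ (a * 2 + i mod 2, a' * 2 + j mod 2))"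
  define Bp where "Bp = mat 2 2 (\<lambda>(a,a'). psi \<theta> $$ (a * 2 + i mod 2, a' * 2 + j mod 2))"
  have BPc: "BP \<in> carrier_mat 2 2" unfolding BP_def by simp
  have "Bp = (xv \<theta> (i mod 2) * xv \<theta> (j mod 2)) \<cdot>\<^sub>m BP"
  proof (rule eq_matI)
    fix a a' assume "a < dim_row ((xv \<theta> (i mod 2) * xv \<theta> (j mod 2)) \<cdot>\<^sub>m BP)" "a' < dim_col ((xv \<theta> (i mod 2) * xv \<theta> (j mod 2)) \<cdot>\<^sub>m BP)"
    then have aa: "a < 2" "a' < 2" unfolding BP_def by auto
    have m: "i mod 2 < 2" "j mod 2 < 2" by auto
    have i4: "a * 2 + i mod 2 < 4" "a' * 2 + j mod 2 < 4" using aa m by auto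
    show "Bp $$ (a,a') = ((xv \<theta> (i mod 2) * xv \<theta> (j mod 2)) \<cdot>\<^sub>m BP) $$ (a,a')"
      unfolding Bp_def BP_def using aa i4
      apply (simp add: psi_idx Phi_def)
      using less2[OF aa(1)] less2[OF aa(2)] less2[OF m(1)] less2[OF m(2)]
      by (auto simp: pvf_def xv_def)
  qed (auto simp: Bp_def BP_def)
  then have LB: "L Bp = (xv \<theta> (i mod 2) * xv \<theta> (j mod 2)) \<cdot>\<^sub>m L BP"
    using Lc BPc unfolding quantum_channel_def by blast
  have LBc: "L BP \<in> carrier_mat 4 4" using Lc BPc unfolding quantum_channel_def by blast
  have d: "i div 2 < 4" "j div 2 < 4" using ij by auto
  show ?thesis
    unfolding tensor_id_def using ij d LBc
    by (simp add: Bp_def[symmetric] BP_def[symmetric] LB)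
qed

lemma sum2: "(\<Sum>k<2::nat. f k) = f 0 + (f 1 :: 'a::comm_monoid_add)"
  by (simp add: numeral_eq_Suc lessThan_Suc add_ac)

definition rJ :: "complex mat \<Rightarrow> nat \<Rightarrow> nat \<Rightarrow> real" where "rJ J i j = Re (J $$ (i,j))"

definition P1 :: "real \<Rightarrow> complex mat \<Rightarrow> real" where
  "P1 \<theta> J = (cos \<theta>)^2 * (cos \<theta>)^2 * (rJ J 0 0 + rJ J 2 2) + (cos \<theta>)^2 * (sin \<theta>)^2 * (rJ J 0 5 + rJ J 5 0 + rJ J 2 7 + rJ J 7 2)
     + (sin \<theta>)^2 * (sin \<theta>)^2 * (rJ J 5 5 + rJ J 7 7)"

definition P2 :: "real \<Rightarrow> complex mat \<Rightarrow> real" where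
  "P2 \<theta> J = (cos \<theta>)^2 * (cos \<theta>)^2 * (rJ J 0 0 + rJ J 4 4) + (cos \<theta>)^2 * (sin \<theta>)^2 * (rJ J 0 3 + rJ J 3 0 + rJ J 4 7 + rJ J 7 4)
     + (sin \<theta>)^2 * (sin \<theta>)^2 * (rJ J 3 3 + rJ J 7 7)"

lemma psd_J: assumes Lc: "quantum_channel L 2 4" shows "psd 8 (tensor_id L 2 4 2 Phi)"
proof -
  have "psd (2*2) Phi" using psd_Phi by simp
  then have "psd (4*2) (tensor_id L 2 4 2 Phi)" using Lc unfolding quantum_channel_def by blast
  then show ?thesis by simp
qed

lemma fid1:
  assumes Lc: "quantum_channel L 2 4" and th: "0 < \<theta>" "\<theta> \<le> pi/4"
  shows "fidelity (psi \<theta>) (red_A1B (tensor_id L 2 4 2 (psi \<theta>))) = sqrt (P1 \<theta> (tensor_id L 2 4 2 Phi))"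
    "P1 \<theta> (tensor_id L 2 4 2 Phi) \<ge> 0"
proof -
  define J where "J = tensor_id L 2 4 2 Phi"
  have pJ: "psd 8 J" using psd_J[OF Lc] J_def by simp
  define C where "C = complex_of_real ((cos \<theta>)^2)"
  define S where "S = complex_of_real ((sin \<theta>)^2)"
  define p where "p = (\<Sum>i<4. \<Sum>j<4. pvf \<theta> i * red_A1B (tensor_id L 2 4 2 (psi \<theta>)) $$ (i,j) * pvf \<theta> j)"
  define q1 where "q1 = qf 8 J (\<lambda>k. if k = 0 then C else if k = 5 then S else 0)"
  define q2 where "q2 = qf 8 J (\<lambda>k. if k = 2 then C else if k = 7 then S else 0)"
  have q1: "q1 = C * C * J $$ (0,0) + C * S * J $$ (0,5) + S * C * J $$ (5,0) + S * S * J $$ (5,5)"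
    unfolding q1_def by (subst qf2) (auto simp: C_def S_def)
  have q2: "q2 = C * C * J $$ (2,2) + C * S * J $$ (2,7) + S * C * J $$ (7,2) + S * S * J $$ (7,7)"
    unfolding q2_def by (subst qf2) (auto simp: C_def S_def)
  have pq: "p = q1 + q2"
    unfolding p_def q1 q2 sum4 red_A1B_def using T_entry[OF Lc]
    by (simp add: sum2 pvf_def xv_def C_def S_def J_def power2_eq_square algebra_simps) (simp add: numeral_2_eq_2)
  have "Im p = 0" "Re p \<ge> 0" unfolding pq using psd_qf[OF pJ] q1_def q2_def by auto
  moreover have "Re p = P1 \<theta> J"
    unfolding pq q1 q2 P1_def rJ_def C_def S_def by (simp add: algebra_simps)
  ultimately show "fidelity (psi \<theta>) (red_A1B (tensor_id L 2 4 2 (psi \<theta>))) = sqrt (P1 \<theta> (tensor_id L 2 4 2 Phi))"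
     "P1 \<theta> (tensor_id L 2 4 2 Phi) \<ge> 0"
    using fid_pure[OF th _ p_def] unfolding J_def by (auto simp: red_A1B_def)
qed

lemma fid2:
  assumes Lc: "quantum_channel L 2 4" and th: "0 < \<theta>" "\<theta> \<le> pi/4"
  shows "fidelity (psi \<theta>) (red_A2B (tensor_id L 2 4 2 (psi \<theta>))) = sqrt (P2 \<theta> (tensor_id L 2 4 2 Phi))"
    "P2 \<theta> (tensor_id L 2 4 2 Phi) \<ge> 0"
proof -
  define J where "J = tensor_id L 2 4 2 Phi"
  have pJ: "psd 8 J" using psd_J[OF Lc] J_def by simp
  define C where "C = complex_of_real ((cos \<theta>)^2)"
  define S where "S = complex_of_real ((sin \<theta>)^2)"
  define p where "p = (\<Sum>i<4. \<Sum>j<4. pvf \<theta> i * red_A2B (tensor_id L 2 4 2 (psi \<theta>)) $$ (i,j) * pvf \<theta> j)"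
  define q1 where "q1 = qf 8 J (\<lambda>k. if k = 0 then C else if k = 3 then S else 0)"
  define q2 where "q2 = qf 8 J (\<lambda>k. if k = 4 then C else if k = 7 then S else 0)"
  have q1: "q1 = C * C * J $$ (0,0) + C * S * J $$ (0,3) + S * C * J $$ (3,0) + S * S * J $$ (3,3)"
    unfolding q1_def by (subst qf2) (auto simp: C_def S_def)
  have q2: "q2 = C * C * J $$ (4,4) + C * S * J $$ (4,7) + S * C * J $$ (7,4) + S * S * J $$ (7,7)"
    unfolding q2_def by (subst qf2) (auto simp: C_def S_def)
  have pq: "p = q1 + q2"
    unfolding p_def q1 q2 sum4 red_A2B_def using T_entry[OF Lc]
    by (simp add: sum2 pvf_def xv_def C_def S_def J_def power2_eq_square algebra_simps)
  have "Im p = 0" "Re p \<ge> 0" unfolding pq using psd_qf[OF pJ] q1_def q2_def by auto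
  moreover have "Re p = P2 \<theta> J"
    unfolding pq q1 q2 P2_def rJ_def C_def S_def by (simp add: algebra_simps)
  ultimately show "fidelity (psi \<theta>) (red_A2B (tensor_id L 2 4 2 (psi \<theta>))) = sqrt (P2 \<theta> (tensor_id L 2 4 2 Phi))"
     "P2 \<theta> (tensor_id L 2 4 2 Phi) \<ge> 0"
    using fid_pure[OF th _ p_def] unfolding J_def by (auto simp: red_A2B_def)
qed

definition Eb :: "nat \<Rightarrow> complex mat" where
  "Eb b = mat 2 2 (\<lambda>(a,a'). Phi $$ (a * 2 + b, a' * 2 + b))"

lemma J_diag: "i < 8 \<Longrightarrow> tensor_id L 2 4 2 Phi $$ (i,i) = L (Eb (i mod 2)) $$ (i div 2, i div 2)"
  unfolding tensor_id_def Eb_def by simp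

lemma tp:
  assumes Lc: "quantum_channel L 2 4"
  shows "rJ (tensor_id L 2 4 2 Phi) 0 0 + rJ (tensor_id L 2 4 2 Phi) 2 2 + rJ (tensor_id L 2 4 2 Phi) 4 4 + rJ (tensor_id L 2 4 2 Phi) 6 6 = 1"
    "rJ (tensor_id L 2 4 2 Phi) 1 1 + rJ (tensor_id L 2 4 2 Phi) 3 3 + rJ (tensor_id L 2 4 2 Phi) 5 5 + rJ (tensor_id L 2 4 2 Phi) 7 7 = 1"
proof -
  have Ec: "Eb b \<in> carrier_mat 2 2" for b unfolding Eb_def by simp
  have tr: "mtrace (L (Eb b)) = mtrace (Eb b)" for b using Lc Ec unfolding quantum_channel_def by blast
  have LEc: "L (Eb b) \<in> carrier_mat 4 4" for b using Lc Ec unfolding quantum_channel_def by blast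
  have m: "mtrace (L (Eb b)) = L (Eb b) $$ (0,0) + L (Eb b) $$ (1,1) + L (Eb b) $$ (2,2) + L (Eb b) $$ (3,3)" for b
    unfolding mtrace_def using LEc[of b] by (simp add: sum4)
  have e0: "mtrace (Eb 0) = 1" "mtrace (Eb 1) = 1" unfolding mtrace_def Eb_def Phi_def by (simp_all add: sum2)
  show "rJ (tensor_id L 2 4 2 Phi) 0 0 + rJ (tensor_id L 2 4 2 Phi) 2 2 + rJ (tensor_id L 2 4 2 Phi) 4 4 + rJ (tensor_id L 2 4 2 Phi) 6 6 = 1"
    using arg_cong[OF trans[OF m[of 0, symmetric] trans[OF tr[of 0] e0(1)]], of Re]
    unfolding rJ_def by (simp add: J_diag)
  show "rJ (tensor_id L 2 4 2 Phi) 1 1 + rJ (tensor_id L 2 4 2 Phi) 3 3 + rJ (tensor_id L 2 4 2 Phi) 5 5 + rJ (tensor_id L 2 4 2 Phi) 7 7 = 1"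
    using arg_cong[OF trans[OF m[of 1, symmetric] trans[OF tr[of 1] e0(2)]], of Re]
    unfolding rJ_def by (simp add: J_diag)
qed

lemma dual_bound:
  assumes Lc: "quantum_channel L 2 4"
    and C: "C = (cos \<theta>)^2" and S: "S = (sin \<theta>)^2"
    and y0: "y0 \<ge> 0" and y1: "y1 \<ge> 0"
    and a0: "y0 - C*C \<ge> 0" and b0: "2*y1 - S*S \<ge> 0" and m0: "(C*S)^2 \<le> (y0 - C*C) * (2*y1 - S*S)"
    and a1: "2*y0 - C*C \<ge> 0" and b1: "y1 - S*S \<ge> 0" and m1: "(C*S)^2 \<le> (2*y0 - C*C) * (y1 - S*S)"
  shows "P1 \<theta> (tensor_id L 2 4 2 Phi) + P2 \<theta> (tensor_id L 2 4 2 Phi) \<le> 2 * (y0 + y1)"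
proof -
  define J where "J = tensor_id L 2 4 2 Phi"
  have pJ: "psd 8 J" using psd_J[OF Lc] J_def by simp
  have E: "rJ J 0 0 + rJ J 2 2 + rJ J 4 4 + rJ J 6 6 = 1" and O: "rJ J 1 1 + rJ J 3 3 + rJ J 5 5 + rJ J 7 7 = 1"
    using tp[OF Lc] J_def by auto
  have d6: "rJ J 6 6 \<ge> 0" and d1: "rJ J 1 1 \<ge> 0" using psd_diag[OF pJ] unfolding rJ_def by auto
  have X03: "(C*S) * (rJ J 0 3 + rJ J 3 0) \<le> (y0 - C*C) * rJ J 0 0 + (2*y1 - S*S) * rJ J 3 3"
    using psd2[OF pJ _ _ _ a0 b0 m0, of 0 3] unfolding rJ_def by simp
  have X05: "(C*S) * (rJ J 0 5 + rJ J 5 0) \<le> (y0 - C*C) * rJ J 0 0 + (2*y1 - S*S) * rJ J 5 5"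
    using psd2[OF pJ _ _ _ a0 b0 m0, of 0 5] unfolding rJ_def by simp
  have X27: "(C*S) * (rJ J 2 7 + rJ J 7 2) \<le> (2*y0 - C*C) * rJ J 2 2 + (y1 - S*S) * rJ J 7 7"
    using psd2[OF pJ _ _ _ a1 b1 m1, of 2 7] unfolding rJ_def by simp
  have X47: "(C*S) * (rJ J 4 7 + rJ J 7 4) \<le> (2*y0 - C*C) * rJ J 4 4 + (y1 - S*S) * rJ J 7 7"
    using psd2[OF pJ _ _ _ a1 b1 m1, of 4 7] unfolding rJ_def by simp
  have id: "2*y0*(rJ J 0 0 + rJ J 2 2 + rJ J 4 4 + rJ J 6 6) + 2*y1*(rJ J 1 1 + rJ J 3 3 + rJ J 5 5 + rJ J 7 7)
      - (P1 \<theta> J + P2 \<theta> J)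
    = ((y0 - C*C) * rJ J 0 0 + (2*y1 - S*S) * rJ J 3 3 - (C*S) * (rJ J 0 3 + rJ J 3 0))
    + ((y0 - C*C) * rJ J 0 0 + (2*y1 - S*S) * rJ J 5 5 - (C*S) * (rJ J 0 5 + rJ J 5 0))
    + ((2*y0 - C*C) * rJ J 2 2 + (y1 - S*S) * rJ J 7 7 - (C*S) * (rJ J 2 7 + rJ J 7 2))
    + ((2*y0 - C*C) * rJ J 4 4 + (y1 - S*S) * rJ J 7 7 - (C*S) * (rJ J 4 7 + rJ J 7 4))
    + 2*y0*rJ J 6 6 + 2*y1*rJ J 1 1"
    unfolding P1_def P2_def C[symmetric] S[symmetric] by (simp add: algebra_simps)
  have "0 \<le> 2*y0*rJ J 6 6 + 2*y1*rJ J 1 1" using y0 y1 d6 d1 by simp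
  then have "P1 \<theta> J + P2 \<theta> J \<le> 2*y0*(rJ J 0 0 + rJ J 2 2 + rJ J 4 4 + rJ J 6 6) + 2*y1*(rJ J 1 1 + rJ J 3 3 + rJ J 5 5 + rJ J 7 7)"
    using id X03 X05 X27 X47 by linarith
  then show ?thesis using E O J_def by simp
qed

lemma sum_split: fixes d n :: nat shows "(\<Sum>i<d*n. f i) = (\<Sum>u<d. \<Sum>y<n. f (u*n+y))"
proof -
  have "(\<Sum>i<d*n. f i) = (\<Sum>u<d. sum f {u*n..<u*n+n})" using sum.nat_group[of f n d] by simp
  also have "\<dots> = (\<Sum>u<d. \<Sum>y<n. f (u*n+y))"
    by (rule sum.cong[OF refl]) (simp add: sum.atLeastLessThan_shift_0[of f] atLeast0LessThan comp_def)
  finally show ?thesis .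
qed

lemma perm6:
  "(\<Sum>u\<in>UU. \<Sum>y\<in>YY. \<Sum>u'\<in>UU. \<Sum>y'\<in>YY. \<Sum>a\<in>AA. \<Sum>a'\<in>AA. G u y u' y' a a')
 = (\<Sum>a\<in>AA. \<Sum>y\<in>YY. \<Sum>a'\<in>AA. \<Sum>y'\<in>YY. \<Sum>u\<in>UU. \<Sum>u'\<in>UU. (G u y u' y' a a' :: complex))"
proof -
  have "(\<Sum>u\<in>UU. \<Sum>y\<in>YY. \<Sum>u'\<in>UU. \<Sum>y'\<in>YY. \<Sum>a\<in>AA. \<Sum>a'\<in>AA. G u y u' y' a a')
      = (\<Sum>u\<in>UU. \<Sum>y\<in>YY. \<Sum>u'\<in>UU. \<Sum>a\<in>AA. \<Sum>y'\<in>YY. \<Sum>a'\<in>AA. G u y u' y' a a')"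
    by (rule sum.cong[OF refl], rule sum.cong[OF refl], rule sum.cong[OF refl], rule sum.swap)
  also have "\<dots> = (\<Sum>u\<in>UU. \<Sum>y\<in>YY. \<Sum>a\<in>AA. \<Sum>u'\<in>UU. \<Sum>y'\<in>YY. \<Sum>a'\<in>AA. G u y u' y' a a')"
    by (rule sum.cong[OF refl], rule sum.cong[OF refl], rule sum.swap)
  also have "\<dots> = (\<Sum>u\<in>UU. \<Sum>a\<in>AA. \<Sum>y\<in>YY. \<Sum>u'\<in>UU. \<Sum>y'\<in>YY. \<Sum>a'\<in>AA. G u y u' y' a a')"
    by (rule sum.cong[OF refl], rule sum.swap)
  also have "\<dots> = (\<Sum>a\<in>AA. \<Sum>u\<in>UU. \<Sum>y\<in>YY. \<Sum>u'\<in>UU. \<Sum>y'\<in>YY. \<Sum>a'\<in>AA. G u y u' y' a a')"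
    by (rule sum.swap)
  also have "\<dots> = (\<Sum>a\<in>AA. \<Sum>y\<in>YY. \<Sum>u\<in>UU. \<Sum>u'\<in>UU. \<Sum>y'\<in>YY. \<Sum>a'\<in>AA. G u y u' y' a a')"
    by (rule sum.cong[OF refl], rule sum.swap)
  also have "\<dots> = (\<Sum>a\<in>AA. \<Sum>y\<in>YY. \<Sum>u\<in>UU. \<Sum>u'\<in>UU. \<Sum>a'\<in>AA. \<Sum>y'\<in>YY. G u y u' y' a a')"
    by (rule sum.cong[OF refl], rule sum.cong[OF refl], rule sum.cong[OF refl], rule sum.cong[OF refl], rule sum.swap)
  also have "\<dots> = (\<Sum>a\<in>AA. \<Sum>y\<in>YY. \<Sum>u\<in>UU. \<Sum>a'\<in>AA. \<Sum>u'\<in>UU. \<Sum>y'\<in>YY. G u y u' y' a a')"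
    by (rule sum.cong[OF refl], rule sum.cong[OF refl], rule sum.cong[OF refl], rule sum.swap)
  also have "\<dots> = (\<Sum>a\<in>AA. \<Sum>y\<in>YY. \<Sum>a'\<in>AA. \<Sum>u\<in>UU. \<Sum>u'\<in>UU. \<Sum>y'\<in>YY. G u y u' y' a a')"
    by (rule sum.cong[OF refl], rule sum.cong[OF refl], rule sum.swap)
  also have "\<dots> = (\<Sum>a\<in>AA. \<Sum>y\<in>YY. \<Sum>a'\<in>AA. \<Sum>u\<in>UU. \<Sum>y'\<in>YY. \<Sum>u'\<in>UU. G u y u' y' a a')"
    by (rule sum.cong[OF refl], rule sum.cong[OF refl], rule sum.cong[OF refl], rule sum.cong[OF refl], rule sum.swap)
  also have "\<dots> = (\<Sum>a\<in>AA. \<Sum>y\<in>YY. \<Sum>a'\<in>AA. \<Sum>y'\<in>YY. \<Sum>u\<in>UU. \<Sum>u'\<in>UU. G u y u' y' a a')"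
    by (rule sum.cong[OF refl], rule sum.cong[OF refl], rule sum.cong[OF refl], rule sum.swap)
  finally show ?thesis .
qed

lemma adj_carrier: "K \<in> carrier_mat m n \<Longrightarrow> adj K \<in> carrier_mat n m" unfolding adj_def by auto
lemma adj_idx: "K \<in> carrier_mat m n \<Longrightarrow> i < n \<Longrightarrow> j < m \<Longrightarrow> adj K $$ (i,j) = cnj (K $$ (j,i))"
  unfolding adj_def by auto

lemma kraus_entry:
  assumes K: "K \<in> carrier_mat dO dX" and B: "B \<in> carrier_mat dX dX" and u: "u < dO" "u' < dO"
  shows "(K * B * adj K) $$ (u,u') = (\<Sum>a<dX. \<Sum>a'<dX. K $$ (u,a) * B $$ (a,a') * cnj (K $$ (u',a')))"
proof -
  have KB: "K * B \<in> carrier_mat dO dX" using K B by auto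
  have "(K * B * adj K) $$ (u,u') = (\<Sum>a'<dX. (K * B) $$ (u,a') * adj K $$ (a',u'))"
    by (rule mult4[OF KB adj_carrier[OF K] u])
  also have "\<dots> = (\<Sum>a'<dX. (\<Sum>a<dX. K $$ (u,a) * B $$ (a,a')) * cnj (K $$ (u',a')))"
    by (intro sum.cong refl) (simp add: mult4[OF K B] u adj_idx[OF K])
  also have "\<dots> = (\<Sum>a'<dX. \<Sum>a<dX. K $$ (u,a) * B $$ (a,a') * cnj (K $$ (u',a')))"
    by (simp add: sum_distrib_right)
  also have "\<dots> = (\<Sum>a<dX. \<Sum>a'<dX. K $$ (u,a) * B $$ (a,a') * cnj (K $$ (u',a')))"
    by (rule sum.swap)
  finally show ?thesis .
qed

lemma idx_lt: "(a::nat) < d \<Longrightarrow> r < n \<Longrightarrow> a * n + r < d * n"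
proof -
  assume "a < d" "r < n"
  then have "a * n + r < a * n + n" by simp
  also have "\<dots> = Suc a * n" by simp
  also have "\<dots> \<le> d * n" using \<open>a < d\<close> by (intro mult_le_mono1) simp
  finally show ?thesis .
qed

lemma div_lt: "(i::nat) < d * n \<Longrightarrow> i div n < d"
  by (simp add: less_mult_imp_div_less)

lemma mod_lt: "(i::nat) < d * n \<Longrightarrow> i mod n < n"
  by (cases "n = 0") auto

lemma cp_kraus:
  assumes K: "K \<in> carrier_mat dO dX" and X: "psd (dX*n) X"
  shows "psd (dO*n) (tensor_id (\<lambda>Y. K * Y * adj K) dX dO n X)"
proof -
  define T where "T = tensor_id (\<lambda>Y. K * Y * adj K) dX dO n X"
  have Xc: "X \<in> carrier_mat (dX*n) (dX*n)" using X unfolding psd_def by (rule conjunct1)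
  have Xh: "\<And>p q. p < dX*n \<Longrightarrow> q < dX*n \<Longrightarrow> cnj (X $$ (p,q)) = X $$ (q,p)"
    using psd_herm[OF X] by (metis complex_cnj_cnj)
  have Tc: "T \<in> carrier_mat (dO*n) (dO*n)" unfolding T_def tensor_id_def by simp
  have entry: "T $$ (i,j) = (\<Sum>a<dX. \<Sum>a'<dX. K $$ (i div n, a) * X $$ (a*n + i mod n, a'*n + j mod n) * cnj (K $$ (j div n, a')))"
    if ij: "i < dO*n" "j < dO*n" for i j
  proof -
    define B where "B = mat dX dX (\<lambda>(a,a'). X $$ (a * n + i mod n, a' * n + j mod n))"
    have Bc: "B \<in> carrier_mat dX dX" unfolding B_def by simp
    have "T $$ (i,j) = (K * B * adj K) $$ (i div n, j div n)"
      unfolding T_def tensor_id_def B_def using ij by simp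
    also have "\<dots> = (\<Sum>a<dX. \<Sum>a'<dX. K $$ (i div n, a) * B $$ (a,a') * cnj (K $$ (j div n, a')))"
      by (rule kraus_entry[OF K Bc div_lt[OF ij(1)] div_lt[OF ij(2)]])
    also have "\<dots> = (\<Sum>a<dX. \<Sum>a'<dX. K $$ (i div n, a) * X $$ (a*n + i mod n, a'*n + j mod n) * cnj (K $$ (j div n, a')))"
      unfolding B_def by (intro sum.cong refl) simp
    finally show ?thesis .
  qed
  have herm: "adj T = T"
  proof (rule eq_matI)
    fix i j assume "i < dim_row T" "j < dim_col T"
    then have ij: "i < dO*n" "j < dO*n" using Tc by auto
    have "adj T $$ (i,j) = cnj (T $$ (j,i))" unfolding adj_def using ij Tc by auto
    also have "\<dots> = (\<Sum>a<dX. \<Sum>a'<dX. cnj (K $$ (j div n, a)) * X $$ (a'*n + i mod n, a*n + j mod n) * K $$ (i div n, a'))"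
      unfolding entry[OF ij(2) ij(1)] using idx_lt mod_lt[OF ij(1)] mod_lt[OF ij(2)]
      by (simp add: Xh)
    also have "\<dots> = (\<Sum>a'<dX. \<Sum>a<dX. cnj (K $$ (j div n, a)) * X $$ (a'*n + i mod n, a*n + j mod n) * K $$ (i div n, a'))"
      by (rule sum.swap)
    also have "\<dots> = T $$ (i,j)" unfolding entry[OF ij] by (intro sum.cong refl) (simp add: mult_ac)
    finally show "adj T $$ (i,j) = T $$ (i,j)" .
  qed (use Tc in \<open>auto simp: adj_def\<close>)
  have quad: "Im q = 0 \<and> Re q \<ge> 0" if q: "q = (\<Sum>i<dO*n. \<Sum>j<dO*n. cnj (v $ i) * T $$ (i,j) * v $ j)" for q v
  proof -
    define w where "w m = (\<Sum>u<dO. cnj (K $$ (u, m div n)) * v $ (u*n + m mod n))" for m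
    define G where "G u y u' y' a a' = cnj (v $ (u*n+y)) * K $$ (u,a) * X $$ (a*n+y, a'*n+y') * cnj (K $$ (u',a')) * v $ (u'*n+y')" for u y u' y' a a'
    have "q = (\<Sum>u<dO. \<Sum>y<n. \<Sum>j<dO*n. cnj (v $ (u*n+y)) * T $$ (u*n+y,j) * v $ j)"
      unfolding q by (rule sum_split)
    also have "\<dots> = (\<Sum>u<dO. \<Sum>y<n. \<Sum>u'<dO. \<Sum>y'<n. cnj (v $ (u*n+y)) * T $$ (u*n+y,u'*n+y') * v $ (u'*n+y'))"
      by (rule sum.cong[OF refl], rule sum.cong[OF refl], rule sum_split)
    also have "\<dots> = (\<Sum>u<dO. \<Sum>y<n. \<Sum>u'<dO. \<Sum>y'<n. \<Sum>a<dX. \<Sum>a'<dX. G u y u' y' a a')"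
    proof (intro sum.cong refl)
      fix u y u' y' assume "u \<in> {..<dO}" "y \<in> {..<n}" "u' \<in> {..<dO}" "y' \<in> {..<n}"
      then have b: "u < dO" "y < n" "u' < dO" "y' < n" by auto
      have i1: "u*n+y < dO*n" "u'*n+y' < dO*n" using idx_lt b by auto
      show "cnj (v $ (u*n+y)) * T $$ (u*n+y,u'*n+y') * v $ (u'*n+y') = (\<Sum>a<dX. \<Sum>a'<dX. G u y u' y' a a')"
        unfolding entry[OF i1] G_def using b by (simp add: sum_distrib_left sum_distrib_right mult_ac)
    qed
    also have "\<dots> = (\<Sum>a<dX. \<Sum>y<n. \<Sum>a'<dX. \<Sum>y'<n. \<Sum>u<dO. \<Sum>u'<dO. G u y u' y' a a')"
      by (rule perm6)
    also have "\<dots> = (\<Sum>a<dX. \<Sum>y<n. \<Sum>a'<dX. \<Sum>y'<n. cnj (w (a*n+y)) * X $$ (a*n+y, a'*n+y') * w (a'*n+y'))"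
    proof (intro sum.cong refl)
      fix a y a' y' assume "a \<in> {..<dX}" "y \<in> {..<n}" "a' \<in> {..<dX}" "y' \<in> {..<n}"
      then have b: "a < dX" "y < n" "a' < dX" "y' < n" by auto
      show "(\<Sum>u<dO. \<Sum>u'<dO. G u y u' y' a a') = cnj (w (a*n+y)) * X $$ (a*n+y, a'*n+y') * w (a'*n+y')"
        unfolding w_def G_def using b by (simp add: sum_distrib_left sum_distrib_right mult_ac)
    qed
    also have "\<dots> = (\<Sum>a<dX. \<Sum>y<n. \<Sum>m'<dX*n. cnj (w (a*n+y)) * X $$ (a*n+y, m') * w m')"
      by (rule sum.cong[OF refl], rule sum.cong[OF refl], rule sum_split[symmetric])
    also have "\<dots> = (\<Sum>m<dX*n. \<Sum>m'<dX*n. cnj (w m) * X $$ (m, m') * w m')"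
      by (rule sum_split[symmetric])
    also have "\<dots> = qf (dX*n) X w" unfolding qf_def ..
    finally show ?thesis using psd_qf[OF X, of w] by simp
  qed
  show ?thesis unfolding psd_def Let_def T_def[symmetric] using Tc herm quad by blast
qed

lemma psd_add: assumes A: "psd n A" and B: "psd n B" shows "psd n (A + B)"
proof -
  have Ac: "A \<in> carrier_mat n n" using A unfolding psd_def by (rule conjunct1)
  have Bc: "B \<in> carrier_mat n n" using B unfolding psd_def by (rule conjunct1)
  have c: "A + B \<in> carrier_mat n n" using Ac Bc by simp
  have h: "adj (A + B) = A + B"
  proof (rule eq_matI)
    fix i j assume "i < dim_row (A + B)" "j < dim_col (A + B)"
    then have ij: "i < n" "j < n" using Bc by auto
    show "adj (A + B) $$ (i,j) = (A + B) $$ (i,j)"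
      unfolding adj_def using ij Ac Bc psd_herm[OF A ij(2) ij(1)] psd_herm[OF B ij(2) ij(1)] by simp
  qed (use Ac Bc in \<open>auto simp: adj_def\<close>)
  have q: "Im q = 0 \<and> Re q \<ge> 0" if "q = (\<Sum>i<n. \<Sum>j<n. cnj (v $ i) * (A + B) $$ (i,j) * v $ j)" for q v
  proof -
    have "q = qf n A (\<lambda>i. v $ i) + qf n B (\<lambda>i. v $ i)"
      unfolding that qf_def using Ac Bc by (simp add: sum.distrib[symmetric] algebra_simps)
    then show ?thesis using psd_qf[OF A, of "\<lambda>i. v $ i"] psd_qf[OF B, of "\<lambda>i. v $ i"] by simp
  qed
  show ?thesis unfolding psd_def Let_def using c h q by blast
qed

lemma tensor_id_add:
  assumes f: "\<And>Y. Y \<in> carrier_mat dX dX \<Longrightarrow> f Y \<in> carrier_mat dO dO"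
    and g: "\<And>Y. Y \<in> carrier_mat dX dX \<Longrightarrow> g Y \<in> carrier_mat dO dO"
  shows "tensor_id (\<lambda>Y. f Y + g Y) dX dO n X = tensor_id f dX dO n X + tensor_id g dX dO n X"
proof (rule eq_matI)
  fix i j assume "i < dim_row (tensor_id f dX dO n X + tensor_id g dX dO n X)" "j < dim_col (tensor_id f dX dO n X + tensor_id g dX dO n X)"
  then have ij: "i < dO*n" "j < dO*n" unfolding tensor_id_def by auto
  define B where "B = mat dX dX (\<lambda>(a,a'). X $$ (a * n + i mod n, a' * n + j mod n))"
  have Bc: "B \<in> carrier_mat dX dX" unfolding B_def by simp
  show "tensor_id (\<lambda>Y. f Y + g Y) dX dO n X $$ (i,j) = (tensor_id f dX dO n X + tensor_id g dX dO n X) $$ (i,j)"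
    unfolding tensor_id_def using ij div_lt[OF ij(1)] div_lt[OF ij(2)] f[OF Bc] g[OF Bc]
    by (simp add: B_def[symmetric])
qed (auto simp: tensor_id_def)

definition K0 :: "real \<Rightarrow> real \<Rightarrow> complex mat" where
  "K0 x y = mat 4 2 (\<lambda>(u,b). if u = 0 \<and> b = 0 then complex_of_real x else if (u = 1 \<or> u = 2) \<and> b = 1 then complex_of_real y else 0)"
definition K1 :: "real \<Rightarrow> real \<Rightarrow> complex mat" where
  "K1 z w = mat 4 2 (\<lambda>(u,b). if (u = 1 \<or> u = 2) \<and> b = 0 then complex_of_real z else if u = 3 \<and> b = 1 then complex_of_real w else 0)"
definition Lch :: "real \<Rightarrow> real \<Rightarrow> real \<Rightarrow> real \<Rightarrow> complex mat \<Rightarrow> complex mat" where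
  "Lch x y z w Y = K0 x y * Y * adj (K0 x y) + K1 z w * Y * adj (K1 z w)"

lemma K_dims[simp]: "dim_row (K0 x y) = 4" "dim_col (K0 x y) = 2" "dim_row (K1 z w) = 4" "dim_col (K1 z w) = 2"
  unfolding K0_def K1_def by auto
lemma adj_dims[simp]: "dim_row (adj K) = dim_col K" "dim_col (adj K) = dim_row K" unfolding adj_def by auto

lemma K0c: "K0 x y \<in> carrier_mat 4 2" unfolding K0_def by simp
lemma K1c: "K1 z w \<in> carrier_mat 4 2" unfolding K1_def by simp

lemma kraus_c: "K \<in> carrier_mat dO dX \<Longrightarrow> Y \<in> carrier_mat dX dX \<Longrightarrow> K * Y * adj K \<in> carrier_mat dO dO"
  using adj_carrier by (metis mult_carrier_mat)

lemma Lch_entry: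
  assumes Y: "Y \<in> carrier_mat 2 2" and ij: "i < 4" "j < 4"
  shows "Lch x y z w Y $$ (i,j) =
    (\<Sum>a<2. \<Sum>a'<2. K0 x y $$ (i,a) * Y $$ (a,a') * cnj (K0 x y $$ (j,a'))) +
    (\<Sum>a<2. \<Sum>a'<2. K1 z w $$ (i,a) * Y $$ (a,a') * cnj (K1 z w $$ (j,a')))"
  unfolding Lch_def using kraus_c[OF K1c Y] ij
  by (simp add: kraus_entry[OF K0c Y ij] kraus_entry[OF K1c Y ij])

lemma Lch_channel:
  assumes n1: "x^2 + 2 * z^2 = 1" and n2: "2 * y^2 + w^2 = 1"
  shows "quantum_channel (Lch x y z w) 2 4"
  unfolding quantum_channel_def
proof (intro conjI ballI allI impI)
  fix X :: "complex mat" assume X: "X \<in> carrier_mat 2 2"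
  show "Lch x y z w X \<in> carrier_mat 4 4" unfolding Lch_def using kraus_c[OF K0c X] kraus_c[OF K1c X] by simp
  show "mtrace (Lch x y z w X) = mtrace X"
  proof -
    have d: "dim_row (Lch x y z w X) = 4" unfolding Lch_def using kraus_c[OF K1c X] by simp
    have "mtrace (Lch x y z w X) = X $$ (0,0) * complex_of_real (x^2 + 2 * z^2) + X $$ (1,1) * complex_of_real (2 * y^2 + w^2)"
      unfolding mtrace_def d sum4 using X
      by (simp add: Lch_entry sum2 K0_def K1_def power2_eq_square algebra_simps)
    also have "\<dots> = mtrace X" unfolding n1 n2 mtrace_def using X by (simp add: sum2)
    finally show ?thesis .
  qed
  fix Y :: "complex mat" assume Y: "Y \<in> carrier_mat 2 2"
  show "Lch x y z w (X + Y) = Lch x y z w X + Lch x y z w Y"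
  proof (rule eq_matI)
    fix i j assume "i < dim_row (Lch x y z w X + Lch x y z w Y)" "j < dim_col (Lch x y z w X + Lch x y z w Y)"
    then have ij: "i < 4" "j < 4" unfolding Lch_def using kraus_c[OF K1c Y] by auto
    have XY: "X + Y \<in> carrier_mat 2 2" using X Y by simp
    have cY: "Lch x y z w Y \<in> carrier_mat 4 4" unfolding Lch_def using kraus_c[OF K0c Y] kraus_c[OF K1c Y] by simp
    show "Lch x y z w (X + Y) $$ (i,j) = (Lch x y z w X + Lch x y z w Y) $$ (i,j)"
      using ij cY X Y by (simp add: Lch_entry[OF XY ij] Lch_entry[OF X ij] Lch_entry[OF Y ij] sum2 algebra_simps)
  qed (auto simp: Lch_def kraus_c[OF K1c Y] kraus_c[OF K1c X] kraus_c[OF K1c, of "X + Y"] X Y)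
next
  fix X :: "complex mat" and c :: complex assume X: "X \<in> carrier_mat 2 2"
  show "Lch x y z w (c \<cdot>\<^sub>m X) = c \<cdot>\<^sub>m Lch x y z w X"
  proof (rule eq_matI)
    have cX: "c \<cdot>\<^sub>m X \<in> carrier_mat 2 2" using X by simp
    fix i j assume "i < dim_row (c \<cdot>\<^sub>m Lch x y z w X)" "j < dim_col (c \<cdot>\<^sub>m Lch x y z w X)"
    then have ij: "i < 4" "j < 4" unfolding Lch_def using kraus_c[OF K1c X] by auto
    have cL: "Lch x y z w X \<in> carrier_mat 4 4" unfolding Lch_def using kraus_c[OF K0c X] kraus_c[OF K1c X] by simp
    show "Lch x y z w (c \<cdot>\<^sub>m X) $$ (i,j) = (c \<cdot>\<^sub>m Lch x y z w X) $$ (i,j)"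
      using ij cL X by (simp add: Lch_entry[OF cX ij] Lch_entry[OF X ij] sum2 algebra_simps)
  qed (auto simp: Lch_def kraus_c[OF K1c X] kraus_c[OF K1c, of "c \<cdot>\<^sub>m X"] X)
next
  fix n :: nat and X :: "complex mat" assume X: "psd (2 * n) X"
  have e: "tensor_id (Lch x y z w) 2 4 n X =
      tensor_id (\<lambda>Y. K0 x y * Y * adj (K0 x y)) 2 4 n X + tensor_id (\<lambda>Y. K1 z w * Y * adj (K1 z w)) 2 4 n X"
    unfolding Lch_def by (rule tensor_id_add) (auto intro: kraus_c[OF K0c] kraus_c[OF K1c])
  show "psd (4 * n) (tensor_id (Lch x y z w) 2 4 n X)"
    unfolding e by (intro psd_add cp_kraus[OF K0c X] cp_kraus[OF K1c X])
qed

lemma avg_le: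
  fixes a b V :: real
  assumes "a \<ge> 0" "b \<ge> 0" "V \<ge> 0" "a + b \<le> 2 * V^2"
  shows "(sqrt a + sqrt b) / 2 \<le> V"
proof -
  have "(sqrt a + sqrt b)^2 = a + b + 2 * sqrt a * sqrt b" using assms by (simp add: power2_eq_square algebra_simps)
  also have "\<dots> \<le> 2 * (a + b)"
  proof -
    have "0 \<le> (sqrt a - sqrt b)^2" by simp
    then have "2 * sqrt a * sqrt b \<le> a + b" using assms by (simp add: power2_eq_square algebra_simps)
    then show ?thesis by simp
  qed
  also have "\<dots> \<le> (2 * V)^2" using assms by (simp add: power2_eq_square)
  finally have "(sqrt a + sqrt b)^2 \<le> (2 * V)^2" .
  then have "sqrt a + sqrt b \<le> 2 * V" by (rule power2_le_imp_le) (use assms in simp)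
  then show ?thesis by simp
qed

lemma branch1_dual:
  fixes C S r k :: real
  assumes C: "C > 0" and S: "S > 0" and rr: "r * r = 2" and r: "r > 0" and hk: "2 * k = C * S * r"
    and br: "r * S \<le> C"
  shows "C*C + k \<ge> 0" "S*S/2 + k \<ge> 0" "(C*C + k) - C*C \<ge> 0" "2*(S*S/2 + k) - S*S \<ge> 0"
    "(C*S)^2 \<le> ((C*C + k) - C*C) * (2*(S*S/2 + k) - S*S)"
    "2*(C*C + k) - C*C \<ge> 0" "(S*S/2 + k) - S*S \<ge> 0"
    "(C*S)^2 \<le> (2*(C*C + k) - C*C) * ((S*S/2 + k) - S*S)"
    "2 * ((C*C + k) + (S*S/2 + k)) = 2 * (C + S / r)^2"
proof -
  have "C*S*r > 0" using C S r by simp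
  then have kp: "k > 0" using hk by linarith
  have r1: "r \<ge> 1"
  proof (rule ccontr)
    assume "\<not> r \<ge> 1"
    then have "r < 1" by simp
    have "r * r < 1 * 1" by (rule mult_strict_mono) (use r \<open>r < 1\<close> in simp_all)
    then show False using rr by simp
  qed
  have csr: "C*S/r = C*S*r/2" using rr r by (simp add: field_simps)
  show "C*C + k \<ge> 0" "S*S/2 + k \<ge> 0" "(C*C + k) - C*C \<ge> 0" "2*(C*C + k) - C*C \<ge> 0" "2*(S*S/2 + k) - S*S \<ge> 0"
    using kp by auto
  have kk: "2 * (k * k) = (C*S)^2"
  proof -
    have "4 * (k*k) = (C*S)^2 * (r*r)" using arg_cong[OF hk, of "\<lambda>t. t*t"] by (simp add: power2_eq_square algebra_simps)
    then show ?thesis using rr by simp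
  qed
  show "(C*S)^2 \<le> ((C*C + k) - C*C) * (2*(S*S/2 + k) - S*S)" using kk by simp
  have b1: "k - S*S/2 \<ge> 0"
  proof -
    have "2 * k - S * S = S * (C * r - S)" using hk by (simp add: algebra_simps)
    moreover have "C * r - S \<ge> 0"
    proof -
      have "1 * S \<le> r * S" by (rule mult_right_mono) (use S r1 in simp_all)
      moreover have "C * 1 \<le> C * r" by (rule mult_left_mono) (use C r1 in simp_all)
      ultimately show ?thesis using br by linarith
    qed
    ultimately have "2 * k - S * S \<ge> 0" using S by simp
    then show ?thesis by simp
  qed
  then show "(S*S/2 + k) - S*S \<ge> 0" by simp
  have "(2*(C*C + k) - C*C) * ((S*S/2 + k) - S*S) - (C*S)^2 = C*C*k - k*S*S + 2*(k*k) - 3/2 * (C*S)^2"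
    by (simp add: algebra_simps power2_eq_square)
  also have "\<dots> = k * (C*C - S*S - k)" unfolding kk[symmetric] by (simp add: algebra_simps)
  also have "C*C - S*S - k = (C - r*S) * (C + S / r)"
  proof -
    have e1: "(C - r*S) * (C + S / r) = C*C - S*S + (C*S/r - r*C*S)" using r by (simp add: field_simps)
    have e2: "C*S/r - r*C*S = - k"
      using csr hk by (simp add: algebra_simps)
    show ?thesis unfolding e1 e2 by simp
  qed
  finally have "(2*(C*C + k) - C*C) * ((S*S/2 + k) - S*S) - (C*S)^2 = k * ((C - r*S) * (C + S / r))" .
  moreover have "k * ((C - r*S) * (C + S / r)) \<ge> 0" using kp br C S r by simp
  ultimately show "(C*S)^2 \<le> (2*(C*C + k) - C*C) * ((S*S/2 + k) - S*S)" by simp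
  have "(C + S / r)^2 = C*C + 2*C*S/r + S*S/(r*r)" using r by (simp add: power2_eq_square field_simps)
  also have "2*C*S/r = 2 * k" using csr hk by (simp add: algebra_simps)
  finally show "2 * ((C*C + k) + (S*S/2 + k)) = 2 * (C + S / r)^2" using rr by simp
qed

lemma branch2_attain:
  fixes C S r :: real
  assumes C: "C > 0" and S: "S > 0" and SC: "S \<le> C" and rr: "r * r = 2" and r: "r > 0" and br: "C < r * S"
  defines "\<alpha> \<equiv> (2*C*C - S*S) / (3*S*S*C*C)" and "\<beta> \<equiv> (2*S*S - C*C) / (3*S*S*C*C)"
  defines "p \<equiv> sqrt \<alpha>" and "q \<equiv> sqrt \<beta>"
  shows "(r*p*S)^2 + 2 * (q*S*r/2)^2 = 1" "2 * (p*C*r/2)^2 + (r*q*C)^2 = 1"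
    "(C * (r*p*S) + S * (p*C*r/2))^2 + (C * (q*S*r/2) + S * (r*q*C))^2 = 3/2 * (C*C + S*S)"
proof -
  have a0: "\<alpha> \<ge> 0"
  proof -
    have "S*S \<le> C*C" using SC S by (intro mult_mono) auto
    moreover have "C*C \<ge> 0" by simp
    ultimately have "0 \<le> 2*C*C - S*S" unfolding mult.assoc by linarith
    then show ?thesis unfolding \<alpha>_def using C S by (intro divide_nonneg_pos) auto
  qed
  have b0: "\<beta> \<ge> 0"
  proof -
    have "C*C < (r*S)*(r*S)" using br C by (intro mult_strict_mono) auto
    also have "(r*S)*(r*S) = (r*r)*(S*S)" by (simp add: algebra_simps)
    finally have "C*C \<le> 2*S*S" using rr by simp
    then show ?thesis unfolding \<beta>_def using C S by (intro divide_nonneg_pos) auto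
  qed
  have pp: "p*p = \<alpha>" unfolding p_def using a0 by simp
  have qq: "q*q = \<beta>" unfolding q_def using b0 by simp
  have x2: "(r*p*S)^2 = (r*r)*(p*p)*(S*S)" by (simp add: power2_eq_square algebra_simps)
  have z2: "2 * (q*S*r/2)^2 = (r*r)*(q*q)*(S*S)/2" by (simp add: power2_eq_square algebra_simps)
  have y2: "2 * (p*C*r/2)^2 = (r*r)*(p*p)*(C*C)/2" by (simp add: power2_eq_square algebra_simps)
  have w2: "(r*q*C)^2 = (r*r)*(q*q)*(C*C)" by (simp add: power2_eq_square algebra_simps)
  show "(r*p*S)^2 + 2 * (q*S*r/2)^2 = 1"
    unfolding x2 z2 rr pp qq \<alpha>_def \<beta>_def using C S by (simp add: field_simps)
  show "2 * (p*C*r/2)^2 + (r*q*C)^2 = 1"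
    unfolding y2 w2 rr pp qq \<alpha>_def \<beta>_def using C S by (simp add: field_simps)
  have v1: "(C * (r*p*S) + S * (p*C*r/2))^2 = 9/4 * (r*r) * (p*p) * (C*C*(S*S))" by (simp add: power2_eq_square algebra_simps)
  have v2: "(C * (q*S*r/2) + S * (r*q*C))^2 = 9/4 * (r*r) * (q*q) * (C*C*(S*S))" by (simp add: power2_eq_square algebra_simps)
  show "(C * (r*p*S) + S * (p*C*r/2))^2 + (C * (q*S*r/2) + S * (r*q*C))^2 = 3/2 * (C*C + S*S)"
    unfolding v1 v2 rr pp qq \<alpha>_def \<beta>_def using C S by (simp add: field_simps)
qed

lemma J_Lch: "i < 8 \<Longrightarrow> j < 8 \<Longrightarrow> tensor_id (Lch x y z w) 2 4 2 Phi $$ (i,j) =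
   Lch x y z w (mat 2 2 (\<lambda>(a,a'). Phi $$ (a * 2 + i mod 2, a' * 2 + j mod 2))) $$ (i div 2, j div 2)"
  unfolding tensor_id_def by simp

lemma Lch_P1: "P1 \<theta> (tensor_id (Lch x y z w) 2 4 2 Phi) = ((cos \<theta>)^2 * x + (sin \<theta>)^2 * y)^2 + ((cos \<theta>)^2 * z + (sin \<theta>)^2 * w)^2"
  unfolding P1_def rJ_def
  apply (simp add: J_Lch)
  apply (simp add: Lch_entry sum2 K0_def K1_def Phi_def power2_eq_square algebra_simps)
  apply (simp add: power4_eq_xxxx)
  done

lemma Lch_P2: "P2 \<theta> (tensor_id (Lch x y z w) 2 4 2 Phi) = ((cos \<theta>)^2 * x + (sin \<theta>)^2 * y)^2 + ((cos \<theta>)^2 * z + (sin \<theta>)^2 * w)^2"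
  unfolding P2_def rJ_def
  apply (simp add: J_Lch)
  apply (simp add: Lch_entry sum2 K0_def K1_def Phi_def power2_eq_square algebra_simps)
  apply (simp add: power4_eq_xxxx)
  done

lemma cond_equiv:
  assumes th: "0 < \<theta>" "\<theta> \<le> pi/4"
  shows "(\<theta> \<le> arctan (2 powr (-1/4))) = (sqrt 2 * (sin \<theta>)^2 \<le> (cos \<theta>)^2)"
proof -
  define a :: real where "a = 2 powr (-1/4)"
  have c: "cos \<theta> > 0" and s: "sin \<theta> > 0" using cs_facts[OF th] by auto
  have ap: "a > 0" unfolding a_def by simp
  have a2: "a^2 = 1 / sqrt 2"
  proof -
    have "a^2 = 2 powr (-1/4) * 2 powr (-1/4)" unfolding a_def power2_eq_square ..
    also have "\<dots> = 2 powr (-1/4 + -1/4)" by (rule powr_add[symmetric])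
    also have "(-1/4 + -1/4) = - (1/2::real)" by simp
    also have "(2::real) powr (- (1/2)) = inverse (2 powr (1/2))" by (rule powr_minus)
    also have "(2::real) powr (1/2) = sqrt 2" by (rule powr_half_sqrt) simp
    finally show ?thesis by (simp add: divide_inverse)
  qed
  have at: "arctan (tan \<theta>) = \<theta>" by (rule arctan_tan) (use th pi_gt_zero in linarith)+
  have "(\<theta> \<le> arctan a) = (arctan (tan \<theta>) \<le> arctan a)" unfolding at ..
  also have "\<dots> = (tan \<theta> \<le> a)" by (rule arctan_le_iff)
  also have "\<dots> = ((tan \<theta>)^2 \<le> a^2)"
  proof -
    have "tan \<theta> > 0" using c s by (simp add: tan_def)
    then show ?thesis using ap abs_le_square_iff[of "tan \<theta>" a] by simp
  qed
  also have "(tan \<theta>)^2 = (sin \<theta>)^2 / (cos \<theta>)^2" by (simp add: tan_def power_divide)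
  also have "((sin \<theta>)^2 / (cos \<theta>)^2 \<le> a^2) = (sqrt 2 * (sin \<theta>)^2 \<le> (cos \<theta>)^2)"
    unfolding a2 using c by (simp add: field_simps)
  finally show ?thesis unfolding a_def .
qed

lemma S_le_C:
  assumes th: "0 < \<theta>" "\<theta> \<le> pi/4"
  shows "(sin \<theta>)^2 \<le> (cos \<theta>)^2"
proof -
  have "0 \<le> cos (2 * \<theta>)" by (rule cos_ge_zero) (use th pi_gt_zero in linarith)+
  then show ?thesis unfolding cos_double by simp
qed

theorem theorem4:
  fixes \<theta> :: real
  assumes "0 < \<theta>" and "\<theta> \<le> pi / 4"
  shows "f2 (psi \<theta>) =
    (if \<theta> \<le> arctan (2 powr (-1/4))
     then (cos \<theta>)^2 + (sin \<theta>)^2 / sqrt 2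
     else sqrt (3/2 * ((cos \<theta>)^4 + (sin \<theta>)^4)))"
proof -
  have th: "0 < \<theta>" "\<theta> \<le> pi/4" using assms by auto
  define C where "C = (cos \<theta>)^2"
  define S where "S = (sin \<theta>)^2"
  define r :: real where "r = sqrt 2"
  have r: "r > 0" "r * r = 2" unfolding r_def by auto
  have CS: "C > 0" "S > 0" unfolding C_def S_def using cs_facts[OF th] by auto
  have SC: "S \<le> C" unfolding C_def S_def using S_le_C[OF th] .
  define V where "V = (if r * S \<le> C then C + S / r else sqrt (3/2 * (C*C + S*S)))"
  have Veq: "(if \<theta> \<le> arctan (2 powr (-1/4)) then (cos \<theta>)^2 + (sin \<theta>)^2 / sqrt 2
     else sqrt (3/2 * ((cos \<theta>)^4 + (sin \<theta>)^4))) = V"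
  proof -
    have "(cos \<theta>)^4 = C * C" "(sin \<theta>)^4 = S * S" unfolding C_def S_def by (simp_all add: power4_eq_xxxx power2_eq_square)
    then show ?thesis unfolding V_def cond_equiv[OF th] r_def C_def S_def by simp
  qed
  have V0: "V \<ge> 0" unfolding V_def using CS r by auto
  define FS where "FS = {(fidelity (psi \<theta>) (red_A1B (tensor_id L 2 4 2 (psi \<theta>)))
               + fidelity (psi \<theta>) (red_A2B (tensor_id L 2 4 2 (psi \<theta>)))) / 2
             | L. quantum_channel L 2 4}"
  have ub: "v \<le> V" if "v \<in> FS" for v
  proof -
    obtain L where Lc: "quantum_channel L 2 4" and v: "v = (fidelity (psi \<theta>) (red_A1B (tensor_id L 2 4 2 (psi \<theta>)))
               + fidelity (psi \<theta>) (red_A2B (tensor_id L 2 4 2 (psi \<theta>)))) / 2"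
      using \<open>v \<in> FS\<close> unfolding FS_def by blast
    define J where "J = tensor_id L 2 4 2 Phi"
    have v2: "v = (sqrt (P1 \<theta> J) + sqrt (P2 \<theta> J)) / 2" unfolding v J_def fid1(1)[OF Lc th] fid2(1)[OF Lc th] ..
    have P0: "P1 \<theta> J \<ge> 0" "P2 \<theta> J \<ge> 0" unfolding J_def using fid1(2)[OF Lc th] fid2(2)[OF Lc th] by auto
    have "P1 \<theta> J + P2 \<theta> J \<le> 2 * V^2"
    proof (cases "r * S \<le> C")
      case True
      define k where "k = C * S * r / 2"
      have hk: "2 * k = C * S * r" unfolding k_def by simp
      note B = branch1_dual[OF CS r(2) r(1) hk True]
      have "P1 \<theta> J + P2 \<theta> J \<le> 2 * ((C*C + k) + (S*S/2 + k))"
        unfolding J_def by (rule dual_bound[OF Lc C_def S_def B(1-8)])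
      also have "\<dots> = 2 * V^2" unfolding B(9) V_def using True by simp
      finally show ?thesis .
    next
      case False
      have "P1 \<theta> J + P2 \<theta> J \<le> 2 * (3/2*(C*C) + 3/2*(S*S))"
        unfolding J_def by (rule dual_bound[OF Lc C_def S_def]) (use CS in \<open>simp_all add: power2_eq_square\<close>)
      also have "\<dots> = 2 * V^2" unfolding V_def using False CS by (simp add: algebra_simps)
      finally show ?thesis .
    qed
    then show ?thesis unfolding v2 using avg_le[OF P0 V0] by simp
  qed
  have att: "V \<in> FS"
  proof (cases "r * S \<le> C")
    case True
    define L where "L = Lch 1 (1/r) 0 0"
    have Lc: "quantum_channel L 2 4" unfolding L_def
      by (rule Lch_channel) (use r in \<open>simp_all add: power2_eq_square\<close>)
    have P: "P1 \<theta> (tensor_id L 2 4 2 Phi) = V^2" "P2 \<theta> (tensor_id L 2 4 2 Phi) = V^2"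
      unfolding L_def Lch_P1 Lch_P2 C_def[symmetric] S_def[symmetric] V_def using True by simp_all
    have "(fidelity (psi \<theta>) (red_A1B (tensor_id L 2 4 2 (psi \<theta>)))
               + fidelity (psi \<theta>) (red_A2B (tensor_id L 2 4 2 (psi \<theta>)))) / 2 = V"
      unfolding fid1(1)[OF Lc th] fid2(1)[OF Lc th] P using V0 by simp
    then show ?thesis unfolding FS_def using Lc by blast
  next
    case False
    then have br: "C < r * S" by simp
    define \<alpha> where "\<alpha> = (2*C*C - S*S) / (3*S*S*C*C)"
    define \<beta> where "\<beta> = (2*S*S - C*C) / (3*S*S*C*C)"
    define p where "p = sqrt \<alpha>"
    define q where "q = sqrt \<beta>"
    note B = branch2_attain[OF CS SC r(2) r(1) br, folded \<alpha>_def \<beta>_def, folded p_def q_def]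
    define L where "L = Lch (r*p*S) (p*C*r/2) (q*S*r/2) (r*q*C)"
    have Lc: "quantum_channel L 2 4" unfolding L_def
      by (rule Lch_channel) (use B in simp_all)
    have P: "P1 \<theta> (tensor_id L 2 4 2 Phi) = V^2" "P2 \<theta> (tensor_id L 2 4 2 Phi) = V^2"
      unfolding L_def Lch_P1 Lch_P2 C_def[symmetric] S_def[symmetric] V_def B(3) using False CS by simp_all
    have "(fidelity (psi \<theta>) (red_A1B (tensor_id L 2 4 2 (psi \<theta>)))
               + fidelity (psi \<theta>) (red_A2B (tensor_id L 2 4 2 (psi \<theta>)))) / 2 = V"
      unfolding fid1(1)[OF Lc th] fid2(1)[OF Lc th] P using V0 by simp
    then show ?thesis unfolding FS_def using Lc by blast
  qed
  have "f2 (psi \<theta>) = Sup FS" unfolding f2_def FS_def ..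
  also have "\<dots> = V" by (rule cSup_eq_maximum[OF att ub])
  finally show ?thesis unfolding Veq .
qed


end
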